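(* Let $(\hat{x}_i,\hat{a}_i,\hat{y}_i)$, $i=1,\dots,N$, be observed data points in $\mathbb{R}^n\times\{0,1\}\times\mathbb{R}$ with empirical distribution $\hat{\mathbb{P}}^N=\frac1N\sum_{i=1}^N\delta_{(\hat{x}_i,\hat{a}_i,\hat{y}_i)}$ and empirical marginals $\hat{p}^N_a=\frac1N\#\{i:\hat{a}_i=a\}$. Let $\alpha,\beta\ge0$, let $c((x,a,y),(x',a',y'))=\alpha\|x-x'\|+\infty\cdot|a-a'|+\beta|y-y'|$ (with $\infty\cdot0=0$), and $W_c^2(\mathbb{P},\mathbb{Q})=\inf_{\pi\in\Pi(\mathbb{P},\mathbb{Q})}\mathbb{E}_\pi[c^2]$. Let $\mathcal{F}_{\mathcal{R}}$ be a set of probability distributions on $\mathbb{R}^n\times\{0,1\}\times\mathbb{R}$ and $\mathcal{F}_{\mathcal{R}}(\hat{p}^N)=\{\mathbb{Q}\in\mathcal{F}_{\mathcal{R}}:\mathbb{Q}(A=a)=\hat{p}^N_a\ \forall a\in\{0,1\}\}$. Suppose some $\mathbb{Q}\in\mathcal{F}_{\mathcal{R}}$ satisfies $W_c^2(\hat{\mathbb{P}}^N,\mathbb{Q})<\infty$. Then $$\inf_{\mathbb{Q}\in\mathcal{F}_{\mathcal{R}}}W_c^2(\hat{\mathbb{P}}^N,\mathbb{Q})=\inf_{\mathbb{Q}\in\mathcal{F}_{\mathcal{R}}(\hat{p}^N)}W_c^2(\hat{\mathbb{P}}^N,\mathbb{Q}).$$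
   Context: $\|\cdot\|$ is the Euclidean norm; $\Pi(\mathbb{P},\mathbb{Q})$ is the set of couplings of $\mathbb{P}$ and $\mathbb{Q}$. In the paper, $\mathcal{F}_{\mathcal{R}}$ is the set of distributions relative to which a regressor $\mathcal{R}:\mathbb{R}^n\to\mathbb{R}$ is fair under a chosen fairness criterion. *)

theory Defs
  imports "HOL-Probability.Probability"
begin

text \<open>Sample space R^n x {0,1} x R; the sensitive attribute {0,1} is encoded as bool
  (True = 1, False = 0), with the discrete sigma-algebra; R^n and R carry Borel sets.\<close>

definition Zspace :: "((real^'n) \<times> bool \<times> real) measure" where
  "Zspace = borel \<Otimes>\<^sub>M (count_space UNIV \<Otimes>\<^sub>M borel)"

definition prob_dists :: "((real^'n) \<times> bool \<times> real) measure set" where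
  "prob_dists = {Q. prob_space Q \<and> sets Q = sets Zspace}"

definition couplings :: "'a measure \<Rightarrow> 'a measure \<Rightarrow> ('a \<times> 'a) measure set" where
  "couplings P Q = {\<pi>. prob_space \<pi> \<and> sets \<pi> = sets (P \<Otimes>\<^sub>M Q)
      \<and> distr \<pi> P fst = P \<and> distr \<pi> Q snd = Q}"

definition cost :: "real \<Rightarrow> real \<Rightarrow> (real^'n) \<times> bool \<times> real \<Rightarrow> (real^'n) \<times> bool \<times> real \<Rightarrow> ennreal" where
  "cost \<alpha> \<beta> z z' = (case z of (x, a, y) \<Rightarrow> case z' of (x', a', y') \<Rightarrow>
      ennreal (\<alpha> * norm (x - x')) + (if a = a' then 0 else \<top>) + ennreal (\<beta> * \<bar>y - y'\<bar>))"

definition W2 :: "real \<Rightarrow> real \<Rightarrow> ((real^'n) \<times> bool \<times> real) measure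
    \<Rightarrow> ((real^'n) \<times> bool \<times> real) measure \<Rightarrow> ennreal" where
  "W2 \<alpha> \<beta> P Q = (INF \<pi> \<in> couplings P Q. \<integral>\<^sup>+ w. (cost \<alpha> \<beta> (fst w) (snd w))^2 \<partial>\<pi>)"

text \<open>Empirical distribution (1/N) sum_{i=1}^N delta_{z_i}: pushforward of the uniform
  distribution on the indices {1..N}.\<close>
definition empirical :: "nat \<Rightarrow> (nat \<Rightarrow> (real^'n) \<times> bool \<times> real) \<Rightarrow> ((real^'n) \<times> bool \<times> real) measure" where
  "empirical N z = distr (uniform_count_measure {1..N}) Zspace z"

definition emp_marg :: "nat \<Rightarrow> (nat \<Rightarrow> bool) \<Rightarrow> bool \<Rightarrow> real" where
  "emp_marg N a b = real (card {i \<in> {1..N}. a i = b}) / real N"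

end

theory Submission
  imports Defs
begin

lemma space_Zspace: "space Zspace = UNIV"
  by (simp add: Zspace_def space_pair_measure)

lemma Ebset: "{z. fst (snd z) = b} \<in> sets Zspace"
proof -
  have "(\<lambda>z::(real^'n) \<times> bool \<times> real. fst (snd z)) \<in> measurable Zspace (count_space UNIV)"
    unfolding Zspace_def by measurable
  then have "(\<lambda>z::(real^'n) \<times> bool \<times> real. fst (snd z)) -` {b} \<inter> space Zspace \<in> sets Zspace"
    by (rule measurable_sets) simp
  then show ?thesis by (simp add: space_Zspace vimage_def)
qed

lemma marg_eq:
  fixes P Q :: "((real^'n) \<times> bool \<times> real) measure"
  assumes sP: "sets P = sets Zspace" and sQ: "sets Q = sets Zspace"
    and pi: "\<pi> \<in> couplings P Q"
    and fin: "(\<integral>\<^sup>+ w. (cost \<alpha> \<beta> (fst w) (snd w))^2 \<partial>\<pi>) < \<top>"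
  shows "measure Q {z. fst (snd z) = b} = measure P {z. fst (snd z) = b}"
proof -
  let ?E = "{z::(real^'n) \<times> bool \<times> real. fst (snd z) = b}"
  have ps: "prob_space \<pi>" and spi: "sets \<pi> = sets (P \<Otimes>\<^sub>M Q)"
    and dP: "distr \<pi> P fst = P" and dQ: "distr \<pi> Q snd = Q"
    using pi by (auto simp: couplings_def)
  interpret prob_space \<pi> by (rule ps)
  have spi': "sets \<pi> = sets (Zspace \<Otimes>\<^sub>M Zspace)"
    using spi sets_pair_measure_cong[OF sP sQ] by simp
  have spc: "space \<pi> = UNIV"
    using sets_eq_imp_space_eq[OF spi'] by (simp add: space_pair_measure space_Zspace)
  have mfst: "fst \<in> measurable \<pi> P"
    unfolding measurable_cong_sets[OF spi' sP] by (rule measurable_fst)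
  have msnd: "snd \<in> measurable \<pi> Q"
    unfolding measurable_cong_sets[OF spi' sQ] by (rule measurable_snd)
  have EP: "?E \<in> sets P" using Ebset sP by auto
  have EQ: "?E \<in> sets Q" using Ebset sQ by auto
  have A1: "fst -` ?E \<in> sets \<pi>"
    using measurable_sets[OF mfst EP] spc by simp
  have A2: "snd -` ?E \<in> sets \<pi>"
    using measurable_sets[OF msnd EQ] spc by simp
  define D where "D = {w::((real^'n) \<times> bool \<times> real) \<times> ((real^'n) \<times> bool \<times> real).
      fst (snd (fst w)) \<noteq> fst (snd (snd w))}"
  have Dm: "D \<in> sets \<pi>"
  proof -
    have "(\<lambda>w::((real^'n) \<times> bool \<times> real) \<times> ((real^'n) \<times> bool \<times> real).
        (fst (snd (fst w)), fst (snd (snd w)))) \<in> measurable (Zspace \<Otimes>\<^sub>M Zspace) (count_space UNIV)"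
      unfolding Zspace_def by measurable
    then have "(\<lambda>w::((real^'n) \<times> bool \<times> real) \<times> ((real^'n) \<times> bool \<times> real).
        (fst (snd (fst w)), fst (snd (snd w)))) -` {p. fst p \<noteq> snd p} \<inter> space (Zspace \<Otimes>\<^sub>M Zspace)
        \<in> sets (Zspace \<Otimes>\<^sub>M Zspace)"
      by (rule measurable_sets) simp
    then show ?thesis using spi' by (simp add: D_def space_pair_measure space_Zspace vimage_def)
  qed
  have "(\<integral>\<^sup>+ w. \<top> * indicator D w \<partial>\<pi>) \<le> (\<integral>\<^sup>+ w. (cost \<alpha> \<beta> (fst w) (snd w))^2 \<partial>\<pi>)"
  proof (rule nn_integral_mono)
    fix w :: "((real^'n) \<times> bool \<times> real) \<times> ((real^'n) \<times> bool \<times> real)"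
    show "\<top> * indicator D w \<le> (cost \<alpha> \<beta> (fst w) (snd w))^2"
    proof (cases "w \<in> D")
      case True
      obtain x a y x' a' y' where w: "w = ((x, a, y), (x', a', y'))"
        by (metis prod.collapse)
      have "a \<noteq> a'" using True by (simp add: D_def w)
      then have "cost \<alpha> \<beta> (fst w) (snd w) = \<top>"
        by (simp add: w cost_def)
      then show ?thesis by (simp add: power2_eq_square)
    qed simp
  qed
  then have "\<top> * emeasure \<pi> D < \<top>"
    using fin nn_integral_cmult_indicator[OF Dm, of \<top>] by simp
  then have D0: "emeasure \<pi> D = 0"
    by (metis ennreal_mult_eq_top_iff less_irrefl)
  then have D0': "measure \<pi> D = 0" by (simp add: measure_def)
  have "measure \<pi> (fst -` ?E) \<le> measure \<pi> (snd -` ?E \<union> D)"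
    by (rule finite_measure_mono[OF _ sets.Un[OF A2 Dm]]) (auto simp: D_def)
  also have "\<dots> \<le> measure \<pi> (snd -` ?E) + measure \<pi> D"
    by (rule measure_subadditive[OF A2 Dm]) (simp_all add: emeasure_eq_measure)
  finally have i1: "measure \<pi> (fst -` ?E) \<le> measure \<pi> (snd -` ?E)" using D0' by simp
  have "measure \<pi> (snd -` ?E) \<le> measure \<pi> (fst -` ?E \<union> D)"
    by (rule finite_measure_mono[OF _ sets.Un[OF A1 Dm]]) (auto simp: D_def)
  also have "\<dots> \<le> measure \<pi> (fst -` ?E) + measure \<pi> D"
    by (rule measure_subadditive[OF A1 Dm]) (simp_all add: emeasure_eq_measure)
  finally have i2: "measure \<pi> (snd -` ?E) \<le> measure \<pi> (fst -` ?E)" using D0' by simp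
  have "measure Q ?E = measure (distr \<pi> Q snd) ?E" using dQ by simp
  also have "\<dots> = measure \<pi> (snd -` ?E)"
    using measure_distr[OF msnd EQ] spc by simp
  also have "\<dots> = measure \<pi> (fst -` ?E)" using i1 i2 by simp
  also have "\<dots> = measure (distr \<pi> P fst) ?E"
    using measure_distr[OF mfst EP] spc by simp
  also have "\<dots> = measure P ?E" using dP by simp
  finally show ?thesis .
qed

theorem theorem1:
  fixes N :: nat and xh :: "nat \<Rightarrow> real^'n" and ah :: "nat \<Rightarrow> bool" and yh :: "nat \<Rightarrow> real"
    and \<alpha> \<beta> :: real and F :: "((real^'n) \<times> bool \<times> real) measure set"
  assumes "N \<ge> 1" and "\<alpha> \<ge> 0" and "\<beta> \<ge> 0"
    and "F \<subseteq> prob_dists"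
    and "\<exists>Q\<in>F. W2 \<alpha> \<beta> (empirical N (\<lambda>i. (xh i, ah i, yh i))) Q < \<top>"
  shows "(INF Q\<in>F. W2 \<alpha> \<beta> (empirical N (\<lambda>i. (xh i, ah i, yh i))) Q)
       = (INF Q\<in>{Q\<in>F. \<forall>b. measure Q {z \<in> space Q. fst (snd z) = b} = emp_marg N ah b}.
            W2 \<alpha> \<beta> (empirical N (\<lambda>i. (xh i, ah i, yh i))) Q)"
proof -
  define P where "P = empirical N (\<lambda>i. (xh i, ah i, yh i))"
  have sP: "sets P = sets Zspace" by (simp add: P_def empirical_def)
  have PE: "measure P {z. fst (snd z) = b} = emp_marg N ah b" for b
  proof -
    have m: "(\<lambda>i. (xh i, ah i, yh i)) \<in> measurable (uniform_count_measure {1..N}) Zspace"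
      by (simp add: measurable_def space_uniform_count_measure sets_uniform_count_measure space_Zspace)
    have "measure P {z. fst (snd z) = b}
        = measure (uniform_count_measure {1..N}) ((\<lambda>i. (xh i, ah i, yh i)) -` {z. fst (snd z) = b} \<inter> {1..N})"
      using measure_distr[OF m Ebset] by (simp add: P_def empirical_def space_uniform_count_measure)
    also have "\<dots> = real (card {i \<in> {1..N}. ah i = b}) / real N"
      by (subst measure_uniform_count_measure) (auto intro!: arg_cong[where f=card])
    finally show ?thesis by (simp add: emp_marg_def)
  qed
  let ?G = "{Q\<in>F. \<forall>b. measure Q {z \<in> space Q. fst (snd z) = b} = emp_marg N ah b}"
  have key: "W2 \<alpha> \<beta> P Q = \<top>" if "Q \<in> F" "Q \<notin> ?G" for Q
  proof (rule ccontr)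
    assume "W2 \<alpha> \<beta> P Q \<noteq> \<top>"
    then have "W2 \<alpha> \<beta> P Q < \<top>" using top.not_eq_extremum by blast
    then obtain \<pi> where pi: "\<pi> \<in> couplings P Q"
      and fin: "(\<integral>\<^sup>+ w. (cost \<alpha> \<beta> (fst w) (snd w))^2 \<partial>\<pi>) < \<top>"
      unfolding W2_def INF_less_iff by blast
    have sQ: "sets Q = sets Zspace" using that(1) assms(4) by (auto simp: prob_dists_def)
    have spQ: "space Q = UNIV" using sets_eq_imp_space_eq[OF sQ] space_Zspace by simp
    have "measure Q {z \<in> space Q. fst (snd z) = b} = emp_marg N ah b" for b
      using marg_eq[OF sP sQ pi fin, of b] PE[of b] spQ by simp
    then show False using that by blast
  qed
  show ?thesis
  proof (rule antisym)
    show "(INF Q\<in>F. W2 \<alpha> \<beta> (empirical N (\<lambda>i. (xh i, ah i, yh i))) Q)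
       \<le> (INF Q\<in>?G. W2 \<alpha> \<beta> (empirical N (\<lambda>i. (xh i, ah i, yh i))) Q)"
      by (rule INF_superset_mono) auto
    show "(INF Q\<in>?G. W2 \<alpha> \<beta> (empirical N (\<lambda>i. (xh i, ah i, yh i))) Q)
       \<le> (INF Q\<in>F. W2 \<alpha> \<beta> (empirical N (\<lambda>i. (xh i, ah i, yh i))) Q)"
    proof (rule INF_greatest)
      fix Q assume Q: "Q \<in> F"
      show "(INF Q\<in>?G. W2 \<alpha> \<beta> (empirical N (\<lambda>i. (xh i, ah i, yh i))) Q)
         \<le> W2 \<alpha> \<beta> (empirical N (\<lambda>i. (xh i, ah i, yh i))) Q"
      proof (cases "Q \<in> ?G")
        case True then show ?thesis by (rule INF_lower)
      next
        case False then show ?thesis using key[OF Q] by (simp add: P_def)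
      qed
    qed
  qed
qed

end
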